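(* Let $n\ge 1$ be an integer, $X\sim \mathrm{Bino}(n,p)$ with $p\in[0,1]$, and fix $\alpha\in[0,1]$. Let $T_p:\{0,1,\dots,n\}\times[0,1]\to\mathbb{R}$ be a test statistic satisfying $$T_p(x,p_0)=T_p(n-x,1-p_0)\quad\text{for all } x\in\{0,\dots,n\},\ p_0\in[0,1].$$ Define $$h_p(x,p_0)=\sum_{\{y\in\{0,\dots,n\}:\,T_p(y,p_0)\le T_p(x,p_0)\}} p_B(y,n,p_0),$$ and $C_p(x)=\overline{\{p_0\in[0,1]: h_p(x,p_0)>\alpha\}}$, written $C_p(x)=[L_p(x),U_p(x)]$. Then $$U_p(x)=1-L_p(n-x)\quad\text{for all } x\in\{0,\dots,n\}.$$
   Context: $p_B(y,n,p)=\binom{n}{y}p^y(1-p)^{n-y}$ denotes the binomial probability mass function. For a set $A\subseteq\mathbb{R}$, $\overline{A}$ denotes the smallest closed simply connected set (i.e. closed interval) containing $A$. A small value of $T_p(x,p_0)$ is regarded as evidence against $H_0:p=p_0$; $C_p$ is the resulting confidence interval for $p$ of nominal level $1-\alpha$. *)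

theory Defs
  imports "HOL-Analysis.Analysis"
begin

definition pB :: "nat \<Rightarrow> nat \<Rightarrow> real \<Rightarrow> real" where
  "pB y n p = real (n choose y) * p ^ y * (1 - p) ^ (n - y)"

definition h_p :: "(nat \<Rightarrow> real \<Rightarrow> real) \<Rightarrow> nat \<Rightarrow> nat \<Rightarrow> real \<Rightarrow> real" where
  "h_p T n x p0 = (\<Sum>y\<in>{y\<in>{0..n}. T y p0 \<le> T x p0}. pB y n p0)"

text \<open>Smallest closed simply connected set (closed interval) containing A \<subseteq> R.\<close>
definition interval_hull :: "real set \<Rightarrow> real set" where
  "interval_hull A = closure (convex hull A)"

definition C_p :: "(nat \<Rightarrow> real \<Rightarrow> real) \<Rightarrow> nat \<Rightarrow> real \<Rightarrow> nat \<Rightarrow> real set" where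
  "C_p T n \<alpha> x = interval_hull {p0 \<in> {0..1}. h_p T n x p0 > \<alpha>}"

definition L_p :: "(nat \<Rightarrow> real \<Rightarrow> real) \<Rightarrow> nat \<Rightarrow> real \<Rightarrow> nat \<Rightarrow> real" where
  "L_p T n \<alpha> x = Inf (C_p T n \<alpha> x)"

definition U_p :: "(nat \<Rightarrow> real \<Rightarrow> real) \<Rightarrow> nat \<Rightarrow> real \<Rightarrow> nat \<Rightarrow> real" where
  "U_p T n \<alpha> x = Sup (C_p T n \<alpha> x)"

end

theory Submission
  imports Defs
begin

lemma refl_hull: "interval_hull ((\<lambda>p::real. 1 - p) ` A) = (\<lambda>p. 1 - p) ` interval_hull A"
proof -
  have e: "(\<lambda>p::real. 1 - p) ` B = (+) 1 ` (uminus ` B)" for B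
    by (auto simp: image_image)
  have lin: "linear (uminus :: real \<Rightarrow> real)" by (rule linear_uminus)
  have inj: "inj (uminus :: real \<Rightarrow> real)" by (simp add: inj_on_def)
  show ?thesis
    unfolding interval_hull_def e
    using convex_hull_translation[of 1 "uminus ` A"]
      convex_hull_linear_image[OF lin, of A]
      closure_translation[of "1::real"]
      closure_injective_linear_image[OF lin inj]
    by metis
qed

lemma hull_sub: assumes "A \<subseteq> {0..1::real}" shows "interval_hull A \<subseteq> {0..1}"
  unfolding interval_hull_def
proof (rule closure_minimal)
  show "convex hull A \<subseteq> {0..1}" using assms by (intro hull_minimal) (auto simp: convex_real_interval)
qed simp

theorem proposition1:
  fixes T :: "nat \<Rightarrow> real \<Rightarrow> real" and n :: nat and \<alpha> :: real and x :: nat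
  assumes "n \<ge> 1"
    and "\<alpha> \<in> {0..1}"
    and "\<And>y p0. y \<le> n \<Longrightarrow> p0 \<in> {0..1} \<Longrightarrow> T y p0 = T (n - y) (1 - p0)"
    and "x \<le> n"
    and "C_p T n \<alpha> x \<noteq> {}"
  shows "U_p T n \<alpha> x = 1 - L_p T n \<alpha> (n - x)"
proof -
  note sym = assms(3)
  have hsym: "h_p T n (n - x) (1 - p) = h_p T n x p" if p: "p \<in> {0..1}" for p
  proof -
    have p1: "1 - p \<in> {0..1::real}" using p by auto
    have tx: "T (n - x) (1 - p) = T x p" using sym[OF assms(4) p] by simp
    have ty: "T y (1 - p) = T (n - y) p" if "y \<le> n" for y
      using sym[OF that p1] by simp
    have "h_p T n (n - x) (1 - p) = (\<Sum>y\<in>{y\<in>{0..n}. T (n - y) p \<le> T x p}. pB (n - y) n p)"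
      unfolding h_p_def tx
      apply (rule sum.cong)
      using ty apply auto[1]
      by (auto simp: pB_def binomial_symmetric[symmetric])
    also have "\<dots> = (\<Sum>y\<in>(\<lambda>y. n - y) ` {y\<in>{0..n}. T (n - y) p \<le> T x p}. pB y n p)"
      by (rule sum.reindex[symmetric, unfolded comp_def]) (auto simp: inj_on_def)
    also have "(\<lambda>y. n - y) ` {y\<in>{0..n}. T (n - y) p \<le> T x p} = {y\<in>{0..n}. T y p \<le> T x p}"
    proof (rule set_eqI, rule iffI)
      fix z assume "z \<in> {y\<in>{0..n}. T y p \<le> T x p}"
      then show "z \<in> (\<lambda>y. n - y) ` {y\<in>{0..n}. T (n - y) p \<le> T x p}"
        by (intro image_eqI[of _ _ "n - z"]) auto
    qed auto
    finally show ?thesis unfolding h_p_def .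
  qed
  define S where "S = {p0 \<in> {0..1}. h_p T n x p0 > \<alpha>}"
  have SS: "{p0 \<in> {0..1}. h_p T n (n - x) p0 > \<alpha>} = (\<lambda>p::real. 1 - p) ` S"
  proof (rule set_eqI, rule iffI)
    fix q assume q: "q \<in> {p0 \<in> {0..1}. h_p T n (n - x) p0 > \<alpha>}"
    then have "1 - q \<in> S" using hsym[of "1 - q"] unfolding S_def by auto
    then show "q \<in> (\<lambda>p::real. 1 - p) ` S" by (intro image_eqI[of _ _ "1 - q"]) auto
  next
    fix q assume "q \<in> (\<lambda>p::real. 1 - p) ` S"
    then obtain p where "p \<in> S" "q = 1 - p" by auto
    then show "q \<in> {p0 \<in> {0..1}. h_p T n (n - x) p0 > \<alpha>}"
      using hsym[of p] unfolding S_def by auto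
  qed
  define C where "C = C_p T n \<alpha> x"
  have Cn: "C_p T n \<alpha> (n - x) = (\<lambda>p::real. 1 - p) ` C"
    unfolding C_def C_p_def SS refl_hull S_def ..
  have Cne: "C \<noteq> {}" using assms(5) C_def by simp
  have Cb: "C \<subseteq> {0..1}" unfolding C_def C_p_def by (rule hull_sub) auto
  have bdd: "bdd_above C" using Cb by (auto intro!: bdd_aboveI[of _ 1])
  have "Inf ((\<lambda>p::real. 1 - p) ` C) = 1 - Sup C"
  proof (rule antisym)
    show "1 - Sup C \<le> Inf ((\<lambda>p::real. 1 - p) ` C)"
      using Cne by (intro cInf_greatest) (auto intro: cSup_upper[OF _ bdd(1)])
    have "Sup C \<le> 1 - Inf ((\<lambda>p::real. 1 - p) ` C)"
    proof (rule cSup_least[OF Cne])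
      fix c assume c: "c \<in> C"
      have "bdd_below ((\<lambda>p::real. 1 - p) ` C)" using Cb by (auto intro!: bdd_belowI[of _ 0])
      then have "Inf ((\<lambda>p::real. 1 - p) ` C) \<le> 1 - c" using c by (intro cInf_lower) auto
      then show "c \<le> 1 - Inf ((\<lambda>p::real. 1 - p) ` C)" by simp
    qed
    then show "Inf ((\<lambda>p::real. 1 - p) ` C) \<le> 1 - Sup C" by simp
  qed
  then show ?thesis unfolding U_p_def L_p_def Cn C_def by simp
qed

end
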